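(* Let $\delta>1$, $\gamma>0$, $A_s,A_u>0$, $\rho_s,\rho_u>0$ with $\rho_u<\rho_s$, and write $a=\frac{\delta-1}{\delta}$. For $L>0$ define \[ s^*(L)=\left[\gamma^{-\delta}A_s^{\delta-1}L\right]^{\frac{1}{1+\delta\rho_s}},\quad u^*(L)=\left[\gamma^{-\delta}A_u^{\delta-1}L\right]^{\frac{1}{1+\delta\rho_u}}, \] \[ w_s^*(L)=\gamma\, s^*(L)^{\rho_s},\quad w_u^*(L)=\gamma\, u^*(L)^{\rho_u}, \] and for $x>0$ define $\overline{w}(x)=\dfrac{\left[A_u^{a}+A_s^{a}x^{a}\right]^{\frac{\delta}{\delta-1}}}{1+x}$ and $\pi(x)=\left(\frac{A_s}{A_u}\right)^{a}x^{-1/\delta}$. Then: (i) $s^*,u^*,w_s^*,w_u^*$ are strictly increasing in $L$; (ii) $s^*(L)/u^*(L)$ is strictly decreasing in $L$, and on any open interval $I\subset(0,\infty)$ such that the skill premium satisfies $\pi\big(s^*(L)/u^*(L)\big)>1$ for all $L\in I$, the average wage $L\mapsto\overline{w}\big(s^*(L)/u^*(L)\big)$ is strictly decreasing on $I$.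
   Context: Model of the legal labor market: skilled ($s$) and unskilled ($u$) workers with labor supply $j=(w_j/\gamma)^{1/\rho_j}$; a competitive firm produces legal services with CES technology $L=\left[(A_u u)^{\frac{\delta-1}{\delta}}+(A_s s)^{\frac{\delta-1}{\delta}}\right]^{\frac{\delta}{\delta-1}}$ and pays marginal products $w_j=A_j^{\frac{\delta-1}{\delta}}(L/j)^{1/\delta}$; $L>0$ is treated as an exogenous demand parameter (raised by local bankruptcy filings). $s^*,u^*,w_s^*,w_u^*$ are the equilibrium quantities and wages, $\pi$ is the skill premium $w_s/w_u$ expressed through $x=s/u$, and $\overline{w}$ is the average wage $(uw_u+sw_s)/(u+s)$ expressed through $x=s/u$. *)

theory Defs
  imports Complex_Main
begin

definition s_star :: "real \<Rightarrow> real \<Rightarrow> real \<Rightarrow> real \<Rightarrow> real \<Rightarrow> real" where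
  "s_star \<gamma> \<delta> A_s \<rho>_s L = (\<gamma> powr (-\<delta>) * A_s powr (\<delta> - 1) * L) powr (1 / (1 + \<delta> * \<rho>_s))"

definition u_star :: "real \<Rightarrow> real \<Rightarrow> real \<Rightarrow> real \<Rightarrow> real \<Rightarrow> real" where
  "u_star \<gamma> \<delta> A_u \<rho>_u L = (\<gamma> powr (-\<delta>) * A_u powr (\<delta> - 1) * L) powr (1 / (1 + \<delta> * \<rho>_u))"

definition ws_star :: "real \<Rightarrow> real \<Rightarrow> real \<Rightarrow> real \<Rightarrow> real \<Rightarrow> real" where
  "ws_star \<gamma> \<delta> A_s \<rho>_s L = \<gamma> * (s_star \<gamma> \<delta> A_s \<rho>_s L) powr \<rho>_s"

definition wu_star :: "real \<Rightarrow> real \<Rightarrow> real \<Rightarrow> real \<Rightarrow> real \<Rightarrow> real" where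
  "wu_star \<gamma> \<delta> A_u \<rho>_u L = \<gamma> * (u_star \<gamma> \<delta> A_u \<rho>_u L) powr \<rho>_u"

definition avg_wage :: "real \<Rightarrow> real \<Rightarrow> real \<Rightarrow> real \<Rightarrow> real" where
  "avg_wage \<delta> A_s A_u x =
     (A_u powr ((\<delta> - 1) / \<delta>) + A_s powr ((\<delta> - 1) / \<delta>) * x powr ((\<delta> - 1) / \<delta>))
       powr (\<delta> / (\<delta> - 1)) / (1 + x)"

definition skill_premium :: "real \<Rightarrow> real \<Rightarrow> real \<Rightarrow> real \<Rightarrow> real" where
  "skill_premium \<delta> A_s A_u x = (A_s / A_u) powr ((\<delta> - 1) / \<delta>) * x powr (-1 / \<delta>)"

end

theory Submission imports Defs begin
lemma dd: fixes P Q a b x :: real assumes "P > 0" "Q > 0" "x > 0"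
  shows "((\<lambda>x. (P + Q * x powr a) powr b / (1 + x)) has_real_derivative 
  ((b * (P + Q * x powr a) powr (b - 1) * (Q * (a * x powr (a - 1)))) * (1+x) - (P + Q * x powr a) powr b * 1) / (1+x)^2) (at x)"
proof -
  have n: "P + Q * x powr a > 0" using assms by (simp add: add_pos_nonneg)
  have 1: "((\<lambda>x. P + Q * x powr a) has_real_derivative (Q * (a * x powr (a - 1)))) (at x)"
    using assms by (auto intro!: derivative_eq_intros)
  have 2: "((\<lambda>x. (P + Q * x powr a) powr b) has_real_derivative (b * (P + Q * x powr a) powr (b - 1) * (Q * (a * x powr (a - 1))))) (at x)"
    using DERIV_fun_powr[OF 1 n, of b] by simp
  have 3: "((\<lambda>x. 1 + x) has_real_derivative 1) (at x)" by (auto intro!: derivative_eq_intros)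
  show ?thesis using DERIV_divide[OF 2 3] assms by (simp add: power2_eq_square)
qed

lemma dpos: fixes P Q a x :: real assumes "P > 0" "Q > 0" "x > 0" "0 < a" "Q * x powr (a - 1) > P"
  shows "(1 / a * (P + Q * x powr a) powr (1/a - 1) * (Q * (a * x powr (a - 1)))) * (1+x) - (P + Q * x powr a) powr (1/a) * 1 > 0"
proof -
  define N where "N = P + Q * x powr a"
  have n: "N > 0" using assms by (simp add: add_pos_nonneg N_def)
  have e1: "N powr (1/a) = N powr (1/a - 1) * N" using n by (simp add: powr_diff)
  have e2: "x powr (a-1) * x = x powr a" using assms by (simp add: powr_diff)
  have "(1 / a * N powr (1/a - 1) * (Q * (a * x powr (a - 1)))) * (1+x) - N powr (1/a) * 1
      = N powr (1/a - 1) * (Q * x powr (a-1) + Q * (x powr (a-1) * x) - N)"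
    using assms unfolding e1 by (simp add: field_simps)
  also have "\<dots> = N powr (1/a - 1) * (Q * x powr (a-1) - P)" unfolding e2 N_def by simp
  also have "\<dots> > 0" using n assms by simp
  finally show ?thesis unfolding N_def .
qed

lemma wmono: fixes P Q a y x1 :: real assumes "P > 0" "Q > 0" "0 < y" "y < x1" "0 < a" "a < 1" "Q * x1 powr (a - 1) > P"
  shows "(P + Q * y powr a) powr (1/a) / (1 + y) < (P + Q * x1 powr a) powr (1/a) / (1 + x1)"
proof (rule DERIV_pos_imp_increasing[OF assms(4)])
  fix x assume x1: "y \<le> x" and x2: "x \<le> x1"
  hence x: "y \<le> x \<and> x \<le> x1" by simp
  hence xp: "x > 0" using assms by auto
  have "x1 powr (a-1) \<le> x powr (a-1)" using x xp assms by (intro powr_mono2') auto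
  hence qp: "Q * x powr (a - 1) > P" using assms by (smt (verit) mult_left_mono)
  then show "\<exists>D. ((\<lambda>x. (P + Q * x powr a) powr (1/a) / (1 + x)) has_real_derivative D) (at x) \<and> 0 < D"
  proof (intro exI conjI)
    show "((\<lambda>x. (P + Q * x powr a) powr (1/a) / (1 + x)) has_real_derivative
      ((1/a * (P + Q * x powr a) powr (1/a - 1) * (Q * (a * x powr (a - 1)))) * (1+x) - (P + Q * x powr a) powr (1/a) * 1) / (1+x)^2) (at x)"
      by (rule dd[OF assms(1,2) xp])
    show "0 < ((1/a * (P + Q * x powr a) powr (1/a - 1) * (Q * (a * x powr (a - 1)))) * (1+x) - (P + Q * x powr a) powr (1/a) * 1) / (1+x)^2"
      using dpos[OF assms(1,2) xp assms(5) qp] xp by (intro divide_pos_pos) auto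
  qed
qed
theorem proposition2:
  fixes \<delta> \<gamma> A_s A_u \<rho>_s \<rho>_u :: real
  assumes "\<delta> > 1" "\<gamma> > 0" "A_s > 0" "A_u > 0" "\<rho>_s > 0" "\<rho>_u > 0" "\<rho>_u < \<rho>_s"
  shows "strict_mono_on {0<..} (s_star \<gamma> \<delta> A_s \<rho>_s)
       \<and> strict_mono_on {0<..} (u_star \<gamma> \<delta> A_u \<rho>_u)
       \<and> strict_mono_on {0<..} (ws_star \<gamma> \<delta> A_s \<rho>_s)
       \<and> strict_mono_on {0<..} (wu_star \<gamma> \<delta> A_u \<rho>_u)
       \<and> (\<forall>L1 L2. 0 < L1 \<and> L1 < L2 \<longrightarrow>
            s_star \<gamma> \<delta> A_s \<rho>_s L2 / u_star \<gamma> \<delta> A_u \<rho>_u L2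
              < s_star \<gamma> \<delta> A_s \<rho>_s L1 / u_star \<gamma> \<delta> A_u \<rho>_u L1)
       \<and> (\<forall>I :: real set. open I \<and> connected I \<and> I \<subseteq> {0<..}
            \<and> (\<forall>L\<in>I. skill_premium \<delta> A_s A_u
                   (s_star \<gamma> \<delta> A_s \<rho>_s L / u_star \<gamma> \<delta> A_u \<rho>_u L) > 1)
            \<longrightarrow> (\<forall>L1\<in>I. \<forall>L2\<in>I. L1 < L2 \<longrightarrow>
                  avg_wage \<delta> A_s A_u (s_star \<gamma> \<delta> A_s \<rho>_s L2 / u_star \<gamma> \<delta> A_u \<rho>_u L2)
                < avg_wage \<delta> A_s A_u (s_star \<gamma> \<delta> A_s \<rho>_s L1 / u_star \<gamma> \<delta> A_u \<rho>_u L1)))"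
proof -
  define cs where "cs = \<gamma> powr (-\<delta>) * A_s powr (\<delta> - 1)"
  define cu where "cu = \<gamma> powr (-\<delta>) * A_u powr (\<delta> - 1)"
  define es where "es = 1 / (1 + \<delta> * \<rho>_s)"
  define eu where "eu = 1 / (1 + \<delta> * \<rho>_u)"
  have cs: "cs > 0" and cu: "cu > 0" using assms by (auto simp: cs_def cu_def)
  have esp: "es > 0" and eup: "eu > 0" using assms by (auto simp: es_def eu_def add_pos_pos)
  have eseu: "es < eu"
  proof -
    have h1: "1 + \<delta> * \<rho>_u < 1 + \<delta> * \<rho>_s" using assms by simp
    have h2: "0 < 1 + \<delta> * \<rho>_u" using assms by (simp add: add_pos_pos)
    show ?thesis unfolding es_def eu_def by (rule frac_less2[OF _ _ h2 h1]) simp_all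
  qed
  have sdef: "\<And>L. s_star \<gamma> \<delta> A_s \<rho>_s L = (cs * L) powr es" by (simp add: s_star_def cs_def es_def)
  have udef: "\<And>L. u_star \<gamma> \<delta> A_u \<rho>_u L = (cu * L) powr eu" by (simp add: u_star_def cu_def eu_def)
  have spos: "\<And>L. L > 0 \<Longrightarrow> s_star \<gamma> \<delta> A_s \<rho>_s L > 0" using cs by (simp add: sdef)
  have upos: "\<And>L. L > 0 \<Longrightarrow> u_star \<gamma> \<delta> A_u \<rho>_u L > 0" using cu by (simp add: udef)
  have smono: "strict_mono_on {0<..} (s_star \<gamma> \<delta> A_s \<rho>_s)"
    unfolding strict_mono_on_def sdef using cs esp by (auto intro!: powr_less_mono2 less_imp_le[OF spos] less_imp_le[OF upos])
  have umono: "strict_mono_on {0<..} (u_star \<gamma> \<delta> A_u \<rho>_u)"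
    unfolding strict_mono_on_def udef using cu eup by (auto intro!: powr_less_mono2 less_imp_le[OF spos] less_imp_le[OF upos])
  have wsmono: "strict_mono_on {0<..} (ws_star \<gamma> \<delta> A_s \<rho>_s)"
    unfolding strict_mono_on_def ws_star_def using smono spos assms
    by (auto simp: strict_mono_on_def intro!: powr_less_mono2 less_imp_le[OF spos] less_imp_le[OF upos])
  have wumono: "strict_mono_on {0<..} (wu_star \<gamma> \<delta> A_u \<rho>_u)"
    unfolding strict_mono_on_def wu_star_def using umono upos assms
    by (auto simp: strict_mono_on_def intro!: powr_less_mono2 less_imp_le[OF spos] less_imp_le[OF upos])
  have ratio: "s_star \<gamma> \<delta> A_s \<rho>_s L2 / u_star \<gamma> \<delta> A_u \<rho>_u L2
              < s_star \<gamma> \<delta> A_s \<rho>_s L1 / u_star \<gamma> \<delta> A_u \<rho>_u L1" if L: "0 < L1" "L1 < L2" for L1 L2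
  proof -
    have r1: "s_star \<gamma> \<delta> A_s \<rho>_s L2 / s_star \<gamma> \<delta> A_s \<rho>_s L1 = (L2/L1) powr es"
      unfolding sdef using L cs by (simp add: powr_divide[symmetric])
    have r2: "u_star \<gamma> \<delta> A_u \<rho>_u L2 / u_star \<gamma> \<delta> A_u \<rho>_u L1 = (L2/L1) powr eu"
      unfolding udef using L cu by (simp add: powr_divide[symmetric])
    have "(L2/L1) powr es < (L2/L1) powr eu" using L eseu by simp
    hence "s_star \<gamma> \<delta> A_s \<rho>_s L2 / s_star \<gamma> \<delta> A_s \<rho>_s L1 < u_star \<gamma> \<delta> A_u \<rho>_u L2 / u_star \<gamma> \<delta> A_u \<rho>_u L1"
      using r1 r2 by simp
    thus ?thesis using spos[of L1] spos[of L2] upos[of L1] upos[of L2] L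
      by (simp add: divide_simps mult.commute)
  qed
  define a where "a = (\<delta> - 1) / \<delta>"
  define P where "P = A_u powr a"
  define Q where "Q = A_s powr a"
  have ap: "0 < a" "a < 1" using assms by (auto simp: a_def)
  have P: "P > 0" and Q: "Q > 0" using assms by (auto simp: P_def Q_def)
  have avg: "\<And>x. avg_wage \<delta> A_s A_u x = (P + Q * x powr a) powr (1/a) / (1 + x)"
    by (simp add: avg_wage_def P_def Q_def a_def)
  have prem: "skill_premium \<delta> A_s A_u x = Q / P * x powr (a - 1)" for x
  proof -
    have "a - 1 = -1/\<delta>" using assms by (simp add: a_def field_simps)
    thus ?thesis using assms by (simp add: skill_premium_def P_def Q_def powr_divide a_def)
  qed
  have last: "\<forall>I :: real set. open I \<and> connected I \<and> I \<subseteq> {0<..}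
            \<and> (\<forall>L\<in>I. skill_premium \<delta> A_s A_u
                   (s_star \<gamma> \<delta> A_s \<rho>_s L / u_star \<gamma> \<delta> A_u \<rho>_u L) > 1)
            \<longrightarrow> (\<forall>L1\<in>I. \<forall>L2\<in>I. L1 < L2 \<longrightarrow>
                  avg_wage \<delta> A_s A_u (s_star \<gamma> \<delta> A_s \<rho>_s L2 / u_star \<gamma> \<delta> A_u \<rho>_u L2)
                < avg_wage \<delta> A_s A_u (s_star \<gamma> \<delta> A_s \<rho>_s L1 / u_star \<gamma> \<delta> A_u \<rho>_u L1))"
  proof (intro allI impI ballI)
    fix I :: "real set" and L1 L2
    assume H: "open I \<and> connected I \<and> I \<subseteq> {0<..}
            \<and> (\<forall>L\<in>I. skill_premium \<delta> A_s A_u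
                   (s_star \<gamma> \<delta> A_s \<rho>_s L / u_star \<gamma> \<delta> A_u \<rho>_u L) > 1)"
      and L1: "L1 \<in> I" and L2: "L2 \<in> I" and lt: "L1 < L2"
    have l1p: "L1 > 0" using H L1 by auto
    define x1 where "x1 = s_star \<gamma> \<delta> A_s \<rho>_s L1 / u_star \<gamma> \<delta> A_u \<rho>_u L1"
    define x2 where "x2 = s_star \<gamma> \<delta> A_s \<rho>_s L2 / u_star \<gamma> \<delta> A_u \<rho>_u L2"
    have x2p: "x2 > 0" using spos upos l1p lt unfolding x2_def by simp
    have x21: "x2 < x1" using ratio[OF l1p lt] unfolding x1_def x2_def .
    have "skill_premium \<delta> A_s A_u x1 > 1" using H L1 unfolding x1_def by auto
    hence "Q / P * x1 powr (a - 1) > 1" by (simp add: prem)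
    hence "Q * x1 powr (a - 1) > P" using P by (simp add: field_simps)
    from wmono[OF P Q x2p x21 ap this]
    show "avg_wage \<delta> A_s A_u x2 < avg_wage \<delta> A_s A_u x1" by (simp add: avg)
  qed
  show ?thesis using smono umono wsmono wumono ratio last by blast
qed

end
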